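(* Let $X$ have a pdf $f$ satisfying Conditions (A) and (B) below. Suppose $X$ is quantized by the uniform quantizer $Q_{\mathrm{uni}}^\delta$ and the cells are assigned the real-valued Shannon code. Let $L$ be the resulting random codeword length. Then $$\lim_{\delta\to0}\frac{E[L^2]}{(E[L])^2}=1.$$
   Context: Let $X$ be a real random variable with pdf $f$. Condition (A): $f$ is continuous and differentiable, and its support is a bounded interval $I$. Condition (B): $\int_I f\log_2^2 f\,dx$ and $-\int_I f\log_2 f\,dx$ exist and are finite. The uniform quantizer $Q_{\mathrm{uni}}^\delta$ partitions $I$ into consecutive cells of length $\delta$. Let $p_i$ be the probability that $X$ falls in cell $i$. The real-valued Shannon code assigns length $l_i=-\log_2 p_i$ to cell $i$, and $L=l_i$ when $X$ is in cell $i$. *)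

theory Defs
  imports "HOL-Probability.Probability"
begin

text \<open>Uniform quantizer on the support interval [a,b] with cell length d:
  cell k = [a + k d, a + (k+1) d) for k = 0 .. ceil((b-a)/d) - 2, and the last
  cell is [a + k d, b] for k = ceil((b-a)/d) - 1 (possibly shorter than d).\<close>
definition uq_cell :: "real \<Rightarrow> real \<Rightarrow> real \<Rightarrow> real \<Rightarrow> int" where
  "uq_cell a b d x = min \<lfloor>(x - a) / d\<rfloor> (\<lceil>(b - a) / d\<rceil> - 1)"

definition cell_prob :: "'a measure \<Rightarrow> ('a \<Rightarrow> real) \<Rightarrow> real \<Rightarrow> real \<Rightarrow> real \<Rightarrow> int \<Rightarrow> real" where
  "cell_prob M X a b d i = measure M {\<omega> \<in> space M. uq_cell a b d (X \<omega>) = i}"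

definition shannon_len :: "'a measure \<Rightarrow> ('a \<Rightarrow> real) \<Rightarrow> real \<Rightarrow> real \<Rightarrow> real \<Rightarrow> 'a \<Rightarrow> real" where
  "shannon_len M X a b d \<omega> = - log 2 (cell_prob M X a b d (uq_cell a b d (X \<omega>)))"

end

theory Submission
  imports Defs
begin

lemma inv_log_lim: "((\<lambda>d::real. 1 / (- log 2 d)) \<longlongrightarrow> 0) (at_right 0)"
proof -
  have "LIM x at_right 0. (1 / ln 2) * ln (x::real) :> at_bot"
    by (rule filterlim_tendsto_pos_mult_at_bot[OF tendsto_const _ ln_at_0]) simp
  then have "LIM x at_right 0. log 2 (x::real) :> at_bot"
    by (simp add: log_def)
  then have "LIM x at_right 0. - log 2 (x::real) :> at_top"
    by (simp add: filterlim_uminus_at_top)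
  from tendsto_inverse_0_at_top[OF this] show ?thesis by (simp add: inverse_eq_divide del: minus_divide_right)
qed

lemma ratio_lim:
  fixes E1 E2 :: "real \<Rightarrow> real" and B :: real
  assumes ev: "eventually (\<lambda>d. \<bar>E1 d\<bar> \<le> B \<and> \<bar>E2 d\<bar> \<le> B) (at_right 0)"
  shows "((\<lambda>d. ((- log 2 d)^2 + 2 * (- log 2 d) * E1 d + E2 d) / ((- log 2 d) + E1 d)^2) \<longlongrightarrow> 1) (at_right (0::real))"
proof -
  define v where "v = (\<lambda>d::real. 1 / (- log 2 d))"
  have v0: "(v \<longlongrightarrow> 0) (at_right 0)" unfolding v_def by (rule inv_log_lim)
  have a: "((\<lambda>d. E1 d * v d) \<longlongrightarrow> 0) (at_right 0)"
  proof (rule Lim_null_comparison)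
    show "eventually (\<lambda>d. norm (E1 d * v d) \<le> B * \<bar>v d\<bar>) (at_right 0)"
      using ev by eventually_elim (auto simp: abs_mult intro: mult_right_mono)
    show "((\<lambda>d. B * \<bar>v d\<bar>) \<longlongrightarrow> 0) (at_right 0)"
      using tendsto_mult_right_zero[OF tendsto_rabs_zero[OF v0]] by simp
  qed
  have b: "((\<lambda>d. E2 d * (v d)^2) \<longlongrightarrow> 0) (at_right 0)"
  proof (rule Lim_null_comparison)
    show "eventually (\<lambda>d. norm (E2 d * (v d)^2) \<le> B * (v d)^2) (at_right 0)"
      using ev by eventually_elim (auto simp: abs_mult intro: mult_right_mono)
    show "((\<lambda>d. B * (v d)^2) \<longlongrightarrow> 0) (at_right 0)"
    proof -
      have "((\<lambda>d. (v d)^2) \<longlongrightarrow> 0) (at_right 0)" using tendsto_power[OF v0, of 2] by simp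
      then show ?thesis by (rule tendsto_mult_right_zero)
    qed
  qed
  have lim: "((\<lambda>d. (1 + 2 * (E1 d * v d) + E2 d * (v d)^2) / (1 + E1 d * v d)^2) \<longlongrightarrow> (1 + 2*0 + 0) / (1+0)^2) (at_right 0)"
    by (intro tendsto_intros a b) auto
  have evu: "eventually (\<lambda>d. - log 2 d \<noteq> 0) (at_right (0::real))"
  proof -
    have "eventually (\<lambda>x. x \<in> {0<..<1::real}) (at_right 0)" by (rule eventually_at_right_real) simp
    then show ?thesis
    proof eventually_elim
      case (elim x)
      then have "log 2 x < 0" by (subst log_less_zero_cancel_iff) auto
      then show ?case by simp
    qed
  qed
  show ?thesis
  proof (rule Lim_transform_eventually[OF _ ])
    show "((\<lambda>d. (1 + 2 * (E1 d * v d) + E2 d * (v d)^2) / (1 + E1 d * v d)^2) \<longlongrightarrow> 1) (at_right 0)"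
      using lim by simp
    show "eventually (\<lambda>d. (1 + 2 * (E1 d * v d) + E2 d * (v d)^2) / (1 + E1 d * v d)^2 = ((- log 2 d)^2 + 2 * (- log 2 d) * E1 d + E2 d) / ((- log 2 d) + E1 d)^2) (at_right 0)"
      using evu
    proof eventually_elim
      case (elim d)
      define u where "u = - log 2 d"
      have u: "u \<noteq> 0" using elim u_def by simp
      have "(1 + 2 * (E1 d * v d) + E2 d * (v d)^2) / (1 + E1 d * v d)^2
          = ((1 + 2 * (E1 d * v d) + E2 d * (v d)^2) * u^2) / ((1 + E1 d * v d)^2 * u^2)"
        using u by simp
      also have "\<dots> = (u^2 + 2 * u * E1 d + E2 d) / (u + E1 d)^2"
      proof -
        have vu: "v d * u = 1" using u unfolding v_def u_def by simp
        have n: "(1 + 2 * (E1 d * v d) + E2 d * (v d)^2) * u^2 = u^2 + 2*E1 d*(v d*u)*u + E2 d*(v d*u)^2"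
          by (simp add: algebra_simps power2_eq_square)
        have m: "(1 + E1 d * v d)^2 * u^2 = (u + E1 d * (v d * u))^2"
          by (simp add: algebra_simps power2_eq_square)
        show ?thesis unfolding n m vu by (simp add: algebra_simps)
      qed
      finally show ?case unfolding u_def .
    qed
  qed
qed
lemma uq_meas: "uq_cell a b d \<in> measurable lborel (count_space UNIV)"
  unfolding uq_cell_def by measurable

lemma uq_range:
  assumes "a < b" "0 < d" "x \<in> {a..b}"
  shows "0 \<le> uq_cell a b d x \<and> uq_cell a b d x \<le> \<lceil>(b - a) / d\<rceil> - 1"
proof -
  have "0 \<le> (x - a) / d" using assms by simp
  moreover have "0 < (b - a) / d" using assms by simp
  ultimately show ?thesis unfolding uq_cell_def by auto
qed

lemma uq_interval:
  assumes "a < b" "0 < d" "x \<in> {a..b}" "uq_cell a b d x = i"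
  shows "x \<in> {a + real_of_int i * d .. a + (real_of_int i + 1) * d}"
proof -
  define q where "q = (x - a) / d"
  define N where "N = \<lceil>(b - a) / d\<rceil>"
  have qle: "q \<le> real_of_int N" unfolding q_def N_def
    using assms by (smt (verit, ccfv_SIG) divide_right_mono atLeastAtMost_iff le_of_int_ceiling)
  have iq: "real_of_int i \<le> q \<and> q \<le> real_of_int i + 1"
  proof (cases "\<lfloor>q\<rfloor> \<le> N - 1")
    case True
    then have "i = \<lfloor>q\<rfloor>" using assms(4) unfolding uq_cell_def q_def N_def by simp
    then show ?thesis by linarith
  next
    case False
    then have "i = N - 1" using assms(4) unfolding uq_cell_def q_def N_def by simp
    then show ?thesis using False qle by linarith
  qed
  have x: "x = a + q * d" unfolding q_def using assms by simp
  have "real_of_int i * d \<le> q * d" using iq assms(2) by (intro mult_right_mono) auto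
  moreover have "q * d \<le> (real_of_int i + 1) * d" using iq assms(2) by (intro mult_right_mono) auto
  ultimately show ?thesis unfolding x by auto
qed

lemma g_bound:
  fixes g :: real assumes "0 < g" "g \<le> 1" shows "g * (ln g)^2 \<le> 4"
proof -
  have s: "0 < sqrt g" using assms by simp
  have "ln (1 / sqrt g) \<le> 1 / sqrt g - 1" using s by (intro ln_le_minus_one) simp
  moreover have "ln (1 / sqrt g) = - ln g / 2"
    using assms by (simp add: ln_div ln_sqrt)
  ultimately have "- ln g \<le> 2 / sqrt g" by simp
  moreover have "0 \<le> - ln g" using assms by simp
  ultimately have "(- ln g)^2 \<le> (2 / sqrt g)^2" by (intro power_mono) auto
  then have "(ln g)^2 \<le> 4 / g" using assms by (simp add: power_divide)
  then show ?thesis using assms by (simp add: field_simps mult.commute)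
qed

lemma term_bound:
  fixes p d Mf :: real
  assumes "0 \<le> p" "p \<le> Mf * d" "0 < d" "1 \<le> Mf"
  shows "p * (log 2 d - log 2 p)^2 \<le> d * (4 / (ln 2)^2) + p * (log 2 Mf)^2"
proof (cases "p = 0")
  case True then show ?thesis using assms by simp
next
  case False
  then have p: "0 < p" using assms by simp
  define g where "g = p / d"
  have g0: "0 < g" unfolding g_def using p assms by simp
  have pg: "p = d * g" unfolding g_def using assms by simp
  have lg: "log 2 d - log 2 p = - log 2 g" unfolding g_def using p assms by (simp add: log_divide)
  have C0: "0 \<le> d * (4 / (ln 2)^2)" using assms by simp
  show ?thesis
  proof (cases "g \<le> 1")
    case True
    have "p * (log 2 d - log 2 p)^2 = p * (log 2 g)^2" by (simp add: lg)
    also have "\<dots> = d * (g * (ln g)^2) / (ln 2)^2" by (simp add: pg log_def power_divide)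
    finally have "p * (log 2 d - log 2 p)^2 = d * (g * (ln g)^2) / (ln 2)^2" .
    also have "\<dots> \<le> d * 4 / (ln 2)^2"
      using g_bound[OF g0 True] assms by (intro divide_right_mono mult_left_mono) auto
    moreover have "0 \<le> p * (log 2 Mf)^2" using p by simp
    ultimately show ?thesis by simp
  next
    case False
    have gM: "g \<le> Mf" unfolding g_def using assms by (simp add: divide_le_eq)
    have "0 \<le> log 2 g" using False by simp
    moreover have "log 2 g \<le> log 2 Mf" using gM g0 by simp
    ultimately have "(log 2 g)^2 \<le> (log 2 Mf)^2" by (intro power_mono) auto
    then have "p * (log 2 d - log 2 p)^2 \<le> p * (log 2 Mf)^2"
      unfolding lg using p by (intro mult_left_mono) auto
    then show ?thesis using C0 by linarith
  qed
qed

lemma sum_repr: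
  assumes P: "prob_space M" and Jm: "J \<in> measurable M (count_space UNIV)" and S: "finite S"
    and ae: "AE \<omega> in M. J \<omega> \<in> S"
  shows "(\<integral>\<omega>. h (J \<omega>) \<partial>M) = (\<Sum>i\<in>S. measure M {\<omega>\<in>space M. J \<omega> = i} * h i)"
proof -
  interpret prob_space M by fact
  have sets: "\<And>i. {\<omega>\<in>space M. J \<omega> = i} \<in> sets M"
    using Jm by measurable
  have "(\<integral>\<omega>. h (J \<omega>) \<partial>M) = (\<integral>\<omega>. (\<Sum>i\<in>S. indicator {\<omega>\<in>space M. J \<omega> = i} \<omega> * h i) \<partial>M)"
  proof (rule integral_cong_AE)
    show "(\<lambda>\<omega>. h (J \<omega>)) \<in> borel_measurable M"
      by (rule measurable_compose[OF Jm]) simp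
    show "(\<lambda>\<omega>. \<Sum>i\<in>S. indicator {\<omega> \<in> space M. J \<omega> = i} \<omega> * h i) \<in> borel_measurable M"
      using sets by measurable
    show "AE \<omega> in M. h (J \<omega>) = (\<Sum>i\<in>S. indicator {\<omega> \<in> space M. J \<omega> = i} \<omega> * h i)"
      using AE_space ae
    proof eventually_elim
      case (elim \<omega>)
      have "(\<Sum>i\<in>S. indicator {\<omega> \<in> space M. J \<omega> = i} \<omega> * h i) = (\<Sum>i\<in>S. if J \<omega> = i then h i else 0)"
        using elim by (intro sum.cong) (auto simp: indicator_def)
      also have "\<dots> = h (J \<omega>)" using elim S by (simp add: sum.delta)
      finally show ?case by simp
    qed
  qed
  also have "\<dots> = (\<Sum>i\<in>S. (\<integral>\<omega>. indicator {\<omega>\<in>space M. J \<omega> = i} \<omega> * h i \<partial>M))"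
  proof (rule Bochner_Integration.integral_sum)
    fix i assume "i \<in> S"
    have "integrable M (\<lambda>\<omega>. indicator {\<omega>\<in>space M. J \<omega> = i} \<omega> *\<^sub>R h i)"
      using sets by (intro integrable_indicator) (auto simp: less_top[symmetric])
    then show "integrable M (\<lambda>\<omega>. indicator {\<omega>\<in>space M. J \<omega> = i} \<omega> * h i)" by simp
  qed
  also have "\<dots> = (\<Sum>i\<in>S. measure M {\<omega>\<in>space M. J \<omega> = i} * h i)"
    by (intro sum.cong refl) (simp add: Int_absorb2 subset_iff)
  finally show ?thesis .
qed


lemma per_d:
  assumes P: "prob_space M" and D: "distributed M lborel X (\<lambda>x. ennreal (f x))"
    and ab: "a < b" and supp: "\<forall>x. f x \<noteq> 0 \<longrightarrow> x \<in> {a..b}"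
    and bnd: "\<forall>x. f x \<le> Mf" and M1: "1 \<le> Mf" and d0: "0 < d" and d1: "d \<le> 1"
  shows "\<exists>e1 e2. (\<integral>\<omega>. shannon_len M X a b d \<omega> \<partial>M) = - log 2 d + e1 \<and>
     (\<integral>\<omega>. (shannon_len M X a b d \<omega>)^2 \<partial>M) = (- log 2 d)^2 + 2 * (- log 2 d) * e1 + e2 \<and>
     \<bar>e1\<bar> \<le> 1 + (b - a + 1) * (4 / (ln 2)^2) + (log 2 Mf)^2 \<and>
     \<bar>e2\<bar> \<le> 1 + (b - a + 1) * (4 / (ln 2)^2) + (log 2 Mf)^2"
proof -
  interpret prob_space M by fact
  have Xm: "X \<in> measurable M lborel" and dist: "distr M lborel X = density lborel (\<lambda>x. ennreal (f x))"
    and fm: "(\<lambda>x. ennreal (f x)) \<in> borel_measurable lborel"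
    using D unfolding distributed_def by auto
  define J where "J = (\<lambda>\<omega>. uq_cell a b d (X \<omega>))"
  define N where "N = \<lceil>(b - a) / d\<rceil>"
  define S where "S = {0..N-1}"
  define p where "p = cell_prob M X a b d"
  have p_def': "\<And>i. p i = measure M {\<omega>\<in>space M. J \<omega> = i}" unfolding p_def cell_prob_def J_def by simp
  have Jm: "J \<in> measurable M (count_space UNIV)" unfolding J_def
    using Xm uq_meas by (rule measurable_compose)
  have finS: "finite S" unfolding S_def by simp
  have aeX: "AE \<omega> in M. X \<omega> \<in> {a..b}"
  proof (rule AE_distrD[OF Xm])
    show "AE x in distr M lborel X. x \<in> {a..b}"
      unfolding dist using supp by (subst AE_density[OF fm]) (auto intro!: AE_I2)
  qed
  have aeJ: "AE \<omega> in M. J \<omega> \<in> S"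
    using aeX by eventually_elim (use uq_range[OF ab d0] in \<open>auto simp: J_def S_def N_def\<close>)
  have repr: "\<And>h. (\<integral>\<omega>. h (J \<omega>) \<partial>M) = (\<Sum>i\<in>S. p i * h i)"
    using sum_repr[OF P Jm finS aeJ] by (simp add: p_def')
  have sum1: "(\<Sum>i\<in>S. p i) = 1"
  proof -
    have "(\<Sum>i\<in>S. p i) = prob (space M)" using repr[of "\<lambda>_. 1"] by simp
    then show ?thesis by (simp add: prob_space)
  qed
  have p0: "\<And>i. 0 \<le> p i" by (simp add: p_def')
  have pM: "p i \<le> Mf * d" for i
  proof -
    define C where "C = {x. uq_cell a b d x = i}"
    have Cs: "C \<in> sets lborel" using measurable_sets[OF uq_meas, of "{i}"] by (simp add: C_def vimage_def)
    have "p i = measure M (X -` C \<inter> space M)" by (simp add: p_def' J_def C_def vimage_def Int_def conj_commute)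
    also have "\<dots> = measure (density lborel (\<lambda>x. ennreal (f x))) C" using measure_distr[OF Xm Cs] dist by simp
    also have "\<dots> \<le> Mf * d"
    proof -
      have "emeasure (density lborel (\<lambda>x. ennreal (f x))) C = (\<integral>\<^sup>+x. ennreal (f x) * indicator C x \<partial>lborel)"
        using emeasure_density[OF fm Cs] .
      also have "\<dots> \<le> (\<integral>\<^sup>+x. ennreal Mf * indicator {a + real_of_int i * d .. a + (real_of_int i + 1) * d} x \<partial>lborel)"
      proof (rule nn_integral_mono)
        fix x
        show "ennreal (f x) * indicator C x \<le> ennreal Mf * indicator {a + real_of_int i * d .. a + (real_of_int i + 1) * d} x"
        proof (cases "f x = 0")
          case True then show ?thesis by simp
        next
          case False
          then have "x \<in> {a..b}" using supp by auto
          then have "x \<in> C \<longrightarrow> x \<in> {a + real_of_int i * d .. a + (real_of_int i + 1) * d}"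
            using uq_interval[OF ab d0] by (auto simp: C_def)
          then show ?thesis using bnd by (auto simp: indicator_def intro: ennreal_leI)
        qed
      qed
      also have "\<dots> = ennreal Mf * ennreal d"
        using d0 by (simp add: nn_integral_cmult_indicator algebra_simps)
      finally have "emeasure (density lborel (\<lambda>x. ennreal (f x))) C \<le> ennreal (Mf * d)"
        using M1 d0 by (simp add: ennreal_mult)
      then show ?thesis unfolding measure_def using M1 d0 by (intro enn2real_leI) auto
    qed
    finally show ?thesis .
  qed
  define u where "u = - log 2 d"
  define y where "y = (\<lambda>i. - log 2 (p i) - u)"
  define e1 where "e1 = (\<Sum>i\<in>S. p i * y i)"
  define e2 where "e2 = (\<Sum>i\<in>S. p i * (y i)^2)"
  have sl: "\<And>\<omega>. shannon_len M X a b d \<omega> = - log 2 (p (J \<omega>))"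
    by (simp add: shannon_len_def p_def J_def)
  have EL: "(\<integral>\<omega>. shannon_len M X a b d \<omega> \<partial>M) = u + e1"
  proof -
    have "(\<integral>\<omega>. shannon_len M X a b d \<omega> \<partial>M) = (\<Sum>i\<in>S. p i * (- log 2 (p i)))"
      unfolding sl by (rule repr)
    also have "\<dots> = (\<Sum>i\<in>S. p i * (u + y i))" by (simp add: y_def)
    also have "\<dots> = u * (\<Sum>i\<in>S. p i) + e1"
      by (simp add: e1_def algebra_simps sum.distrib sum_distrib_left)
    finally show ?thesis using sum1 by simp
  qed
  have EL2: "(\<integral>\<omega>. (shannon_len M X a b d \<omega>)^2 \<partial>M) = u^2 + 2 * u * e1 + e2"
  proof -
    have "(\<integral>\<omega>. (shannon_len M X a b d \<omega>)^2 \<partial>M) = (\<Sum>i\<in>S. p i * (- log 2 (p i))^2)"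
      unfolding sl by (rule repr)
    also have "\<dots> = (\<Sum>i\<in>S. u^2 * p i + 2 * u * (p i * y i) + p i * (y i)^2)"
      by (intro sum.cong refl) (simp add: y_def power2_eq_square algebra_simps)
    also have "\<dots> = u^2 * (\<Sum>i\<in>S. p i) + 2 * u * e1 + e2"
      by (simp add: e1_def e2_def sum.distrib sum_distrib_left)
    finally show ?thesis using sum1 by simp
  qed
  define K where "K = (b - a + 1) * (4 / (ln 2)^2) + (log 2 Mf)^2"
  have N1: "1 \<le> N" unfolding N_def using ab d0 by simp
  have Nd: "real_of_int N * d \<le> b - a + 1"
  proof -
    have "real_of_int N < (b - a) / d + 1" unfolding N_def by linarith
    then have "real_of_int N * d < ((b - a) / d + 1) * d" using d0 by (intro mult_strict_right_mono) auto
    also have "\<dots> = b - a + d" using d0 by (simp add: field_simps)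
    finally show ?thesis using d1 by simp
  qed
  have e2_0: "0 \<le> e2" unfolding e2_def using p0 by (intro sum_nonneg) simp
  have e2_K: "e2 \<le> K"
  proof -
    have "e2 \<le> (\<Sum>i\<in>S. d * (4 / (ln 2)^2) + p i * (log 2 Mf)^2)"
      unfolding e2_def
    proof (rule sum_mono)
      fix i assume "i \<in> S"
      have "y i ^2 = (log 2 d - log 2 (p i))^2" by (simp add: y_def u_def power2_eq_square algebra_simps)
      then show "p i * (y i)^2 \<le> d * (4 / (ln 2)^2) + p i * (log 2 Mf)^2"
        using term_bound[OF p0 pM d0 M1] by simp
    qed
    also have "\<dots> = real (card S) * d * (4 / (ln 2)^2) + (log 2 Mf)^2"
      using sum1 by (simp add: sum.distrib sum_distrib_right[symmetric])
    also have "real (card S) = real_of_int N" unfolding S_def using N1 by simp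
    also have "real_of_int N * d * (4 / (ln 2)^2) \<le> (b - a + 1) * (4 / (ln 2)^2)"
      using Nd by (intro mult_right_mono) auto
    finally show ?thesis unfolding K_def by simp
  qed
  have e1_b: "\<bar>e1\<bar> \<le> 1 + e2"
  proof -
    have "\<bar>e1\<bar> \<le> (\<Sum>i\<in>S. \<bar>p i * y i\<bar>)" unfolding e1_def by (rule sum_abs)
    also have "\<dots> \<le> (\<Sum>i\<in>S. p i + p i * (y i)^2)"
    proof (rule sum_mono)
      fix i
      have "0 \<le> (\<bar>y i\<bar> - 1)^2" by simp
      then have "2 * \<bar>y i\<bar> \<le> (y i)^2 + 1" by (simp add: power2_diff)
      then have "\<bar>y i\<bar> \<le> 1 + (y i)^2" by (simp add: add.commute)
      then have "p i * \<bar>y i\<bar> \<le> p i * (1 + (y i)^2)" using p0 by (intro mult_left_mono) auto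
      then show "\<bar>p i * y i\<bar> \<le> p i + p i * (y i)^2" using p0 by (simp add: abs_mult algebra_simps)
    qed
    also have "\<dots> = 1 + e2" using sum1 by (simp add: e2_def sum.distrib)
    finally show ?thesis .
  qed
  have A: "(\<integral>\<omega>. shannon_len M X a b d \<omega> \<partial>M) = - log 2 d + e1" using EL u_def by simp
  have B: "(\<integral>\<omega>. (shannon_len M X a b d \<omega>)^2 \<partial>M) = (- log 2 d)^2 + 2 * (- log 2 d) * e1 + e2" using EL2 u_def by simp
  have C: "\<bar>e1\<bar> \<le> 1 + (b - a + 1) * (4 / (ln 2)^2) + (log 2 Mf)^2" using e1_b e2_K unfolding K_def by linarith
  have D: "\<bar>e2\<bar> \<le> 1 + (b - a + 1) * (4 / (ln 2)^2) + (log 2 Mf)^2" using e2_0 e2_K unfolding K_def by linarith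
  show ?thesis using A B C D by blast
qed


theorem proposition1:
  fixes M :: "'a measure" and X :: "'a \<Rightarrow> real" and f :: "real \<Rightarrow> real" and a b :: real
  assumes "prob_space M"
    and "distributed M lborel X (\<lambda>x. ennreal (f x))"
    and "\<forall>x. 0 \<le> f x"
    and "a < b"
    and "closure {x. f x \<noteq> 0} = {a..b}"
    and "continuous_on {a..b} f"
    and "\<forall>x\<in>{a..b}. f differentiable (at x within {a..b})"
    and "set_integrable lborel {a..b} (\<lambda>x. f x * (log 2 (f x))\<^sup>2)"
    and "set_integrable lborel {a..b} (\<lambda>x. f x * log 2 (f x))"
  shows "((\<lambda>d. (\<integral>\<omega>. (shannon_len M X a b d \<omega>)\<^sup>2 \<partial>M) / (\<integral>\<omega>. shannon_len M X a b d \<omega> \<partial>M)\<^sup>2)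
           \<longlongrightarrow> 1) (at_right 0)"
proof -
  have supp: "\<forall>x. f x \<noteq> 0 \<longrightarrow> x \<in> {a..b}"
  proof (intro allI impI)
    fix x assume "f x \<noteq> 0"
    then have "x \<in> closure {x. f x \<noteq> 0}" using closure_subset[of "{x. f x \<noteq> 0}"] by auto
    then show "x \<in> {a..b}" using assms(5) by simp
  qed
  have "compact (f ` {a..b})" using assms(6) by (intro compact_continuous_image) auto
  then have "bounded (f ` {a..b})" by (rule compact_imp_bounded)
  then obtain Bf where Bf: "\<forall>y\<in>f ` {a..b}. norm y \<le> Bf" unfolding bounded_iff by blast
  define Mf where "Mf = max 1 Bf"
  have bnd: "\<forall>x. f x \<le> Mf"
  proof
    fix x show "f x \<le> Mf"
    proof (cases "x \<in> {a..b}")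
      case True then have "\<bar>f x\<bar> \<le> Bf" using Bf by auto
      then show ?thesis unfolding Mf_def by linarith
    next
      case False then have "f x = 0" using supp by blast
      then show ?thesis unfolding Mf_def by simp
    qed
  qed
  have M1: "1 \<le> Mf" unfolding Mf_def by simp
  define Bc where "Bc = 1 + (b - a + 1) * (4 / (ln 2)^2) + (log 2 Mf)^2"
  define EL where "EL = (\<lambda>d. \<integral>\<omega>. shannon_len M X a b d \<omega> \<partial>M)"
  define EL2 where "EL2 = (\<lambda>d. \<integral>\<omega>. (shannon_len M X a b d \<omega>)^2 \<partial>M)"
  define E1 where "E1 = (\<lambda>d. EL d - (- log 2 d))"
  define E2 where "E2 = (\<lambda>d. EL2 d - ((- log 2 d)^2 + 2 * (- log 2 d) * E1 d))"
  have ev: "eventually (\<lambda>d. \<bar>E1 d\<bar> \<le> Bc \<and> \<bar>E2 d\<bar> \<le> Bc) (at_right 0)"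
  proof -
    have "eventually (\<lambda>x. x \<in> {0<..<1::real}) (at_right 0)" by (rule eventually_at_right_real) simp
    then show ?thesis
    proof eventually_elim
      case (elim d)
      then have "0 < d" "d \<le> 1" by auto
      have "\<exists>e1 e2. EL d = - log 2 d + e1 \<and> EL2 d = (- log 2 d)^2 + 2 * (- log 2 d) * e1 + e2 \<and>
        \<bar>e1\<bar> \<le> Bc \<and> \<bar>e2\<bar> \<le> Bc"
        using per_d[OF assms(1,2,4) supp bnd M1 \<open>0 < d\<close> \<open>d \<le> 1\<close>] unfolding EL_def EL2_def Bc_def .
      then obtain e1 e2 where h: "EL d = - log 2 d + e1" "EL2 d = (- log 2 d)^2 + 2 * (- log 2 d) * e1 + e2"
        "\<bar>e1\<bar> \<le> Bc" "\<bar>e2\<bar> \<le> Bc" by blast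
      then have "E1 d = e1" "E2 d = e2" unfolding E1_def E2_def by simp_all
      then show ?case using h by simp
    qed
  qed
  have eq: "(\<lambda>d. (\<integral>\<omega>. (shannon_len M X a b d \<omega>)\<^sup>2 \<partial>M) / (\<integral>\<omega>. shannon_len M X a b d \<omega> \<partial>M)\<^sup>2)
     = (\<lambda>d. ((- log 2 d)^2 + 2 * (- log 2 d) * E1 d + E2 d) / ((- log 2 d) + E1 d)^2)"
  proof (rule ext)
    fix d
    have h: "\<And>x y::real. x + (y - x) = y" by simp
    show "(\<integral>\<omega>. (shannon_len M X a b d \<omega>)\<^sup>2 \<partial>M) / (\<integral>\<omega>. shannon_len M X a b d \<omega> \<partial>M)\<^sup>2
     = ((- log 2 d)^2 + 2 * (- log 2 d) * E1 d + E2 d) / ((- log 2 d) + E1 d)^2"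
      unfolding E2_def E1_def h EL_def EL2_def ..
  qed
  show ?thesis unfolding eq by (rule ratio_lim[OF ev])
qed

end
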